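(* Under the hypotheses of Theorem 1 (DGD$^t$ from $\mathbf{x}_0=0$, convex $f_i$ with $L_i$-Lipschitz gradients attaining their minima, $h=\sum_if_i$ $\mu_h$-strongly convex with minimizer $x^\star$, $0<\alpha\le\min\{(1+\lambda_n(\mathbf{W}^t))/L,\,c_4\}$), with $\alpha c_2<1$, $\delta=\frac{c_2}{2(1-\alpha c_2)}$, $c_1=\sqrt{1-\alpha c_2/2}$ and $c_3=\sqrt{\alpha^3(\alpha+\delta^{-1})}\,LD$, for all $k=0,1,2,\ldots$ and $1\le i\le n$: $$\|x_{i,k}-x^\star\|\le c_1^k\|x^\star\|+\frac{c_3}{\sqrt{1-c_1^2}\,(1-\beta^t)}+\frac{\alpha D}{1-\beta^t}.$$
   Context: Notation as in Theorem 1: $L=\max_iL_i$, $\mu_{\bar f}=\mu_h/n$, $L_{\bar f}=\frac1n\sum_iL_i$, $c_2=\frac{2\mu_{\bar f}L_{\bar f}}{\mu_{\bar f}+L_{\bar f}}$, $c_4=\frac{2}{\mu_{\bar f}+L_{\bar f}}$, $D=\sqrt{2L\sum_i(f_i(0)-\min f_i)}$. $\mathbf{W}$ is a symmetric doubly-stochastic matrix of a connected network ($w_{ii}>0$, $w_{ij}>0$ iff neighbours), simple eigenvalue $1$, other eigenvalues in $(-1,1)$, $\beta\in(0,1)$ its second largest eigenvalue magnitude, $\lambda_n(\mathbf{W}^t)$ the smallest eigenvalue of $\mathbf{W}^t$. DGD$^t$: $\mathbf{x}_{k+1}=(\mathbf{W}^t\otimes I_p)\mathbf{x}_k-\alpha\nabla\mathbf{f}(\mathbf{x}_k)$,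 $\nabla\mathbf{f}(\mathbf{x})=(\nabla f_1(x_1);\ldots;\nabla f_n(x_n))$, $x_{i,k}$ the $i$-th block of $\mathbf{x}_k$. *)

theory Defs
  imports "HOL-Analysis.Analysis"
begin

fun matpow :: "real^'n^'n \<Rightarrow> nat \<Rightarrow> real^'n^'n" where
  "matpow A 0 = mat 1"
| "matpow A (Suc t) = A ** matpow A t"

definition mat_eigenvalue :: "real^'n^'n \<Rightarrow> real \<Rightarrow> bool" where
  "mat_eigenvalue A l \<longleftrightarrow> (\<exists>v. v \<noteq> 0 \<and> A *v v = l *\<^sub>R v)"

definition lambda_min :: "real^'n^'n \<Rightarrow> real" where
  "lambda_min A = Min {l. mat_eigenvalue A l}"

definition second_eig_mag :: "real^'n^'n \<Rightarrow> real" where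
  "second_eig_mag W = Max {\<bar>l\<bar> | l. mat_eigenvalue W l \<and> l \<noteq> 1}"

definition strongly_convex :: "real \<Rightarrow> ('a::real_inner \<Rightarrow> real) \<Rightarrow> bool" where
  "strongly_convex mu h \<longleftrightarrow> convex_on UNIV (\<lambda>x. h x - (mu / 2) * (norm x)\<^sup>2)"

(* DGD^t iterates: x_{k+1} = (W^t \<otimes> I_p) x_k - alpha grad f(x_k), x_0 = 0 *)
fun dgd :: "real^'n^'n \<Rightarrow> nat \<Rightarrow> real \<Rightarrow> ('n \<Rightarrow> 'a::real_vector \<Rightarrow> 'a) \<Rightarrow> nat \<Rightarrow> 'n::finite \<Rightarrow> 'a"
  where
  "dgd W t alpha g 0 = (\<lambda>i. 0)"
| "dgd W t alpha g (Suc k) =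
     (\<lambda>i. (\<Sum>j\<in>UNIV. (matpow W t $ i $ j) *\<^sub>R dgd W t alpha g k j) - alpha *\<^sub>R g i (dgd W t alpha g k i))"

end

theory Submission
  imports Defs
begin

lemma descent:
  fixes f :: "'v::real_inner \<Rightarrow> real" and g :: "'v \<Rightarrow> 'v"
  assumes der: "\<And>x. (f has_derivative (\<lambda>y. g x \<bullet> y)) (at x)"
    and lip: "\<And>x y. norm (g x - g y) \<le> L * norm (x - y)"
  shows "f y \<le> f x + g x \<bullet> (y - x) + L/2 * (norm (y - x))\<^sup>2"
proof -
  define d where "d = y - x"
  define \<phi> where "\<phi> s = f (x + s *\<^sub>R d) - s * (g x \<bullet> d) - L/2 * s\<^sup>2 * (norm d)\<^sup>2" for s
  have D: "(\<phi> has_real_derivative (g (x + s*\<^sub>R d) \<bullet> d - g x \<bullet> d - L * s * (norm d)\<^sup>2)) (at s)" for s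
  proof -
    have 1: "((\<lambda>s. x + s *\<^sub>R d) has_derivative (\<lambda>h. h *\<^sub>R d)) (at s)"
      by (auto intro!: derivative_eq_intros)
    have 2: "((\<lambda>s. f (x + s *\<^sub>R d)) has_derivative (\<lambda>h. g (x + s*\<^sub>R d) \<bullet> (h *\<^sub>R d))) (at s)"
      using has_derivative_compose[OF 1 der] by simp
    have 3: "((\<lambda>s. f (x + s *\<^sub>R d)) has_real_derivative (g (x + s*\<^sub>R d) \<bullet> d)) (at s)"
      unfolding has_field_derivative_def using 2 by (simp add: mult.commute[of _ "g (x + s*\<^sub>R d) \<bullet> d"])
    have 4: "((\<lambda>s. s * (g x \<bullet> d) + L/2 * s\<^sup>2 * (norm d)\<^sup>2) has_real_derivative (g x \<bullet> d + L * s * (norm d)\<^sup>2)) (at s)"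
      by (rule derivative_eq_intros refl)+ (simp add: algebra_simps)
    have "\<phi> = (\<lambda>s. f (x + s *\<^sub>R d) - (s * (g x \<bullet> d) + L/2 * s\<^sup>2 * (norm d)\<^sup>2))"
      unfolding \<phi>_def by (auto simp: algebra_simps)
    then show ?thesis using DERIV_diff[OF 3 4] by (simp add: algebra_simps)
  qed
  have "\<phi> 1 \<le> \<phi> 0"
  proof (rule DERIV_nonpos_imp_nonincreasing[of 0 1 \<phi>])
    fix s :: real assume s: "0 \<le> s" "s \<le> 1"
    have "(g (x + s*\<^sub>R d) - g x) \<bullet> d \<le> norm (g (x + s*\<^sub>R d) - g x) * norm d"
      by (rule norm_cauchy_schwarz)
    also have "\<dots> \<le> (L * norm (s *\<^sub>R d)) * norm d"
      using lip[of "x + s*\<^sub>R d" x] by (intro mult_right_mono) auto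
    also have "\<dots> = L * s * (norm d)\<^sup>2" using s by (simp add: power2_eq_square)
    finally show "\<exists>y. DERIV \<phi> s :> y \<and> y \<le> 0" using D[of s]
      by (intro exI[of _ "g (x + s*\<^sub>R d) \<bullet> d - g x \<bullet> d - L * s * (norm d)\<^sup>2"])
         (simp add: inner_diff_left)
  qed simp
  thus ?thesis unfolding \<phi>_def d_def by simp
qed

lemma norm_mult_self: "norm (D::'v::real_inner) * norm D = D \<bullet> D"
  by (simp add: power2_norm_eq_inner[symmetric] power2_eq_square)

lemma grad_bound:
  fixes f :: "'v::real_inner \<Rightarrow> real" and g :: "'v \<Rightarrow> 'v"
  assumes der: "\<And>x. (f has_derivative (\<lambda>y. g x \<bullet> y)) (at x)"
    and lip: "\<And>x y. norm (g x - g y) \<le> L * norm (x - y)"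
    and L: "L > 0" and m: "\<And>z. m \<le> f z"
  shows "(norm (g x))\<^sup>2 \<le> 2 * L * (f x - m)"
proof -
  have "f (x - (1/L) *\<^sub>R g x) \<le> f x + g x \<bullet> ((x - (1/L) *\<^sub>R g x) - x) + L/2 * (norm ((x - (1/L) *\<^sub>R g x) - x))\<^sup>2"
    by (rule descent[OF der lip])
  also have "\<dots> = f x - (norm (g x))\<^sup>2 / (2*L)"
    using L by (simp add: power2_norm_eq_inner[symmetric] power2_eq_square field_simps)
  finally have "m \<le> f x - (norm (g x))\<^sup>2 / (2*L)" using m[of "x - (1/L) *\<^sub>R g x"] by linarith
  then show ?thesis using L by (simp add: field_simps)
qed

lemma convex_tangent:
  fixes \<phi> :: "'v::real_inner \<Rightarrow> real"
  assumes cv: "convex_on UNIV \<phi>" and der: "(\<phi> has_derivative (\<lambda>y. P \<bullet> y)) (at x)"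
  shows "\<phi> x + P \<bullet> (y - x) \<le> \<phi> y"
proof -
  define d where "d = y - x"
  define \<psi> where "\<psi> s = \<phi> (x + s *\<^sub>R d)" for s :: real
  have cvp: "convex_on UNIV \<psi>"
  proof (rule convex_onI)
    fix t a b :: real assume t: "t > 0" "t < 1"
    have "x + ((1 - t) *\<^sub>R a + t *\<^sub>R b) *\<^sub>R d = (1-t) *\<^sub>R (x + a *\<^sub>R d) + t *\<^sub>R (x + b *\<^sub>R d)"
      by (simp add: algebra_simps)
    then show "\<psi> ((1 - t) *\<^sub>R a + t *\<^sub>R b) \<le> (1 - t) * \<psi> a + t * \<psi> b"
      unfolding \<psi>_def using convex_onD[OF cv, of t "x + a *\<^sub>R d" "x + b *\<^sub>R d"] t by simp
  qed simp
  have 1: "((\<lambda>s. x + s *\<^sub>R d) has_derivative (\<lambda>h. h *\<^sub>R d)) (at 0)"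
    by (auto intro!: derivative_eq_intros)
  have 2: "(\<psi> has_derivative (\<lambda>h. P \<bullet> (h *\<^sub>R d))) (at 0)"
  proof -
    have der': "(\<phi> has_derivative (\<lambda>y. P \<bullet> y)) (at (x + 0 *\<^sub>R d))" using der by simp
    show ?thesis unfolding \<psi>_def using has_derivative_compose[OF 1 der'] by simp
  qed
  have 3: "(\<psi> has_field_derivative (P \<bullet> d)) (at 0 within UNIV)"
    unfolding has_field_derivative_def using 2 by (simp add: mult.commute[of _ "P \<bullet> d"])
  have "\<psi> 1 - \<psi> 0 \<ge> (P \<bullet> d) * (1 - 0)"
    by (rule convex_on_imp_above_tangent[OF cvp _ _ _ 3]) auto
  then show ?thesis unfolding \<psi>_def d_def by simp
qed

lemma cocoercive_pos:
  fixes \<phi> :: "'v::real_inner \<Rightarrow> real"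
  assumes low: "\<And>x y. \<phi> x + P x \<bullet> (y - x) \<le> \<phi> y"
    and up: "\<And>x y. \<phi> y \<le> \<phi> x + P x \<bullet> (y - x) + K/2 * (norm (y - x))\<^sup>2"
    and K: "K > 0"
  shows "\<phi> x + P x \<bullet> (y - x) + (norm (P y - P x))\<^sup>2 / (2*K) \<le> \<phi> y"
proof -
  define D where "D = P y - P x"
  define z where "z = y - (1/K) *\<^sub>R D"
  have h1: "\<phi> x + P x \<bullet> (z - x) \<le> \<phi> z" by (rule low)
  have h2: "\<phi> z \<le> \<phi> y + P y \<bullet> (z - y) + K/2 * (norm (z - y))\<^sup>2" by (rule up)
  have e1: "P x \<bullet> (z - x) = P x \<bullet> (y - x) - (1/K) * (P x \<bullet> D)"
    unfolding z_def by (simp add: inner_diff_right algebra_simps)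
  have e2: "P y \<bullet> (z - y) = - (1/K) * (P y \<bullet> D)"
    unfolding z_def by (simp add: inner_diff_right algebra_simps)
  have e3: "K/2 * (norm (z - y))\<^sup>2 = (1/(2*K)) * (D \<bullet> D)"
    unfolding z_def using K by (simp add: power2_norm_eq_inner power2_eq_square field_simps norm_mult_self)
  have e4: "P y \<bullet> D - P x \<bullet> D = D \<bullet> D" unfolding D_def by (simp add: inner_diff_left)
  have "(norm (P y - P x))\<^sup>2 / (2*K) = (1/K) * (D \<bullet> D) - (1/(2*K)) * (D \<bullet> D)"
    using K unfolding D_def by (simp add: power2_norm_eq_inner field_simps)
  also have "\<dots> = (1/K) * (P y \<bullet> D) - (1/K) * (P x \<bullet> D) - (1/(2*K)) * (D \<bullet> D)"
    using e4 by (simp add: diff_divide_distrib[symmetric])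
  finally show ?thesis using h1 h2 e1 e2 e3 by linarith
qed

lemma cocoercive:
  fixes \<phi> :: "'v::real_inner \<Rightarrow> real"
  assumes low: "\<And>x y. \<phi> x + P x \<bullet> (y - x) \<le> \<phi> y"
    and up: "\<And>x y. \<phi> y \<le> \<phi> x + P x \<bullet> (y - x) + K/2 * (norm (y - x))\<^sup>2"
    and K: "K \<ge> 0"
  shows "(norm (P x - P y))\<^sup>2 \<le> K * ((P x - P y) \<bullet> (x - y))"
proof -
  have main: "(norm (P x - P y))\<^sup>2 \<le> K' * ((P x - P y) \<bullet> (x - y))" if K': "K' > 0" "K' \<ge> K" for K'
  proof -
    have up': "\<phi> y \<le> \<phi> x + P x \<bullet> (y - x) + K'/2 * (norm (y - x))\<^sup>2" for x y
    proof -
      have "K/2 * (norm (y - x))\<^sup>2 \<le> K'/2 * (norm (y - x))\<^sup>2"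
        using K' by (intro mult_right_mono) auto
      then show ?thesis using up[where x=x and y=y] by linarith
    qed
    have a: "\<phi> x + P x \<bullet> (y - x) + (norm (P y - P x))\<^sup>2 / (2*K') \<le> \<phi> y"
      by (rule cocoercive_pos[OF low up' K'(1)])
    have b: "\<phi> y + P y \<bullet> (x - y) + (norm (P x - P y))\<^sup>2 / (2*K') \<le> \<phi> x"
      by (rule cocoercive_pos[OF low up' K'(1)])
    have c: "norm (P y - P x) = norm (P x - P y)" by (rule norm_minus_commute)
    have d: "P x \<bullet> (y - x) + P y \<bullet> (x - y) = - ((P x - P y) \<bullet> (x - y))"
      by (simp add: inner_diff_left inner_diff_right algebra_simps)
    from a b c d have "(norm (P x - P y))\<^sup>2 / K' \<le> (P x - P y) \<bullet> (x - y)"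
      by (simp add: field_simps)
    then show ?thesis using K' by (simp add: field_simps)
  qed
  show ?thesis
  proof (cases "K > 0")
    case True then show ?thesis using main[of K] by simp
  next
    case False
    with K have K0: "K = 0" by simp
    define a where "a = (P x - P y) \<bullet> (x - y)"
    define b where "b = (norm (P x - P y))\<^sup>2"
    have ab: "b \<le> e * a" if "e > 0" for e using main[of e] that K0 unfolding a_def b_def by simp
    have "b \<le> 0"
    proof (rule ccontr)
      assume "\<not> b \<le> 0"
      then have bp: "b > 0" by simp
      have "b \<le> (b / (2 * (\<bar>a\<bar> + 1))) * a" using ab[of "b / (2 * (\<bar>a\<bar> + 1))"] bp by simp
      also have "\<dots> \<le> (b / (2 * (\<bar>a\<bar> + 1))) * \<bar>a\<bar>" using bp by (intro mult_left_mono) auto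
      also have "\<dots> < b / 2" using bp by (simp add: field_simps)
      finally show False using bp by simp
    qed
    then show ?thesis using K0 unfolding b_def by simp
  qed
qed

lemma rayleigh_max:
  fixes T :: "'v::euclidean_space \<Rightarrow> 'v"
  assumes lin: "linear T" and sa: "\<And>x y. x \<bullet> T y = T x \<bullet> y" and S: "subspace S"
    and inv: "\<And>x. x \<in> S \<Longrightarrow> T x \<in> S" and ne: "x0 \<in> S" "x0 \<noteq> 0"
  shows "\<exists>v\<in>S. norm v = 1 \<and> T v = (v \<bullet> T v) *\<^sub>R v \<and> (\<forall>x\<in>S. x \<bullet> T x \<le> (v \<bullet> T v) * (norm x)\<^sup>2)"
proof -
  define K where "K = S \<inter> sphere 0 1"
  have cK: "compact K" unfolding K_def
    by (rule closed_Int_compact[OF closed_subspace[OF S] compact_sphere])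
  have "(1 / norm x0) *\<^sub>R x0 \<in> K" using ne S unfolding K_def by (auto simp: subspace_scale)
  then have neK: "K \<noteq> {}" by auto
  have bl: "bounded_linear T" using lin by (simp add: linear_conv_bounded_linear)
  have cont: "continuous_on K (\<lambda>x. x \<bullet> T x)"
    by (intro continuous_intros linear_continuous_on bl)
  obtain v where vK: "v \<in> K" and vmax: "\<And>y. y \<in> K \<Longrightarrow> y \<bullet> T y \<le> v \<bullet> T v"
    using continuous_attains_sup[OF cK neK cont] by blast
  define M where "M = v \<bullet> T v"
  have vS: "v \<in> S" and nv: "norm v = 1" using vK unfolding K_def by auto
  have vv: "v \<bullet> v = 1" using nv by (simp add: norm_eq_sqrt_inner)
  have Tsc: "T (c *\<^sub>R x) = c *\<^sub>R T x" for c x using lin by (simp add: linear_scale)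
  have Tadd: "T (x + y) = T x + T y" for x y using lin by (simp add: linear_add)
  have Tdiff: "T (x - y) = T x - T y" for x y using lin by (simp add: linear_diff)
  have bound: "x \<bullet> T x \<le> M * (norm x)\<^sup>2" if xS: "x \<in> S" for x
  proof (cases "x = 0")
    case True then show ?thesis using lin by (simp add: linear_0)
  next
    case False
    define y where "y = (1 / norm x) *\<^sub>R x"
    have "y \<in> K" using xS False S unfolding K_def y_def by (auto simp: subspace_scale)
    then have "y \<bullet> T y \<le> M" using vmax unfolding M_def by blast
    moreover have "y \<bullet> T y = (x \<bullet> T x) / (norm x)\<^sup>2"
      unfolding y_def Tsc by (simp add: power2_eq_square)
    ultimately show ?thesis using False by (simp add: field_simps)
  qed
  define w where "w = T v - M *\<^sub>R v"
  have wS: "w \<in> S" unfolding w_def using vS inv S by (simp add: subspace_diff subspace_scale)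
  have wv: "w \<bullet> v = 0" unfolding w_def M_def using vv
    by (simp add: inner_diff_left inner_diff_right inner_commute)
  have wTv: "w \<bullet> T v = w \<bullet> w"
  proof -
    have "T v = w + M *\<^sub>R v" unfolding w_def by simp
    then show ?thesis using wv by (simp add: inner_add_right)
  qed
  define a where "a = w \<bullet> w"
  define k where "k = M * a - w \<bullet> T w"
  have key: "2 * a \<le> e * k" if e: "e > 0" for e
  proof -
    define z where "z = v + e *\<^sub>R w"
    have zS: "z \<in> S" unfolding z_def using vS wS S by (simp add: subspace_add subspace_scale)
    have "z \<bullet> T z \<le> M * (norm z)\<^sup>2" by (rule bound[OF zS])
    moreover have "z \<bullet> T z = M + 2 * e * a + e\<^sup>2 * (w \<bullet> T w)"
    proof -
      have "v \<bullet> T w = w \<bullet> T v" using sa[of v w] by (simp add: inner_commute)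
      then show ?thesis unfolding z_def Tadd Tsc M_def a_def
        using wTv by (simp add: inner_add_left inner_add_right power2_eq_square algebra_simps)
    qed
    moreover have "(norm z)\<^sup>2 = 1 + e\<^sup>2 * a"
      unfolding z_def power2_norm_eq_inner a_def using vv wv
      by (simp add: inner_add_left inner_add_right inner_commute power2_eq_square algebra_simps)
    ultimately have "2 * e * a \<le> e\<^sup>2 * k" unfolding k_def by (simp add: algebra_simps)
    then have "e * (2 * a) \<le> e * (e * k)" by (simp add: power2_eq_square algebra_simps)
    then show ?thesis using e by simp
  qed
  have a0: "a \<le> 0"
  proof (rule ccontr)
    assume "\<not> a \<le> 0"
    then have ap: "a > 0" by simp
    have "2 * a \<le> (a / (\<bar>k\<bar> + 1)) * k" using key[of "a / (\<bar>k\<bar> + 1)"] ap by simp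
    also have "\<dots> \<le> (a / (\<bar>k\<bar> + 1)) * \<bar>k\<bar>" using ap by (intro mult_left_mono) auto
    also have "\<dots> < a" using ap by (simp add: field_simps)
    finally show False using ap by simp
  qed
  then have "w = 0" unfolding a_def using inner_ge_zero[of w] by (simp add: order_antisym)
  then have "T v = M *\<^sub>R v" unfolding w_def by simp
  then show ?thesis using vS nv bound unfolding M_def by blast
qed

definition Tb :: "real^'n^'n \<Rightarrow> ('a::real_vector)^'n \<Rightarrow> 'a^'n" where
  "Tb A x = (\<chi> i. \<Sum>j\<in>UNIV. (A$i$j) *\<^sub>R x$j)"

lemma Tb_nth: "Tb A x $ i = (\<Sum>j\<in>UNIV. (A$i$j) *\<^sub>R x$j)"
  by (simp add: Tb_def)

lemma Tb_linear: "linear (Tb A)"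
  by (rule linearI) (simp_all add: vec_eq_iff Tb_nth scaleR_add_right sum.distrib scaleR_sum_right mult.commute)

lemma Tb_add: "Tb A (x + y) = Tb A x + Tb A y"
  by (simp add: vec_eq_iff Tb_nth scaleR_add_right sum.distrib)
lemma Tb_diff: "Tb A (x - y) = Tb A x - Tb A y"
  by (simp add: vec_eq_iff Tb_nth scaleR_diff_right sum_subtractf)
lemma Tb_scale: "Tb A (c *\<^sub>R x) = c *\<^sub>R Tb A x"
  by (simp add: vec_eq_iff Tb_nth scaleR_sum_right mult.commute)
lemma Tb_zero: "Tb A 0 = 0"
  by (simp add: vec_eq_iff Tb_nth)

lemma sym_entry: "transpose A = A \<Longrightarrow> A$i$j = A$j$i"
  by (metis transpose_def vec_lambda_beta)

lemma Tb_selfadj: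
  fixes x y :: "'a::real_inner^'n"
  assumes "transpose A = A"
  shows "x \<bullet> Tb A y = Tb A x \<bullet> y"
proof -
  have "x \<bullet> Tb A y = (\<Sum>i\<in>UNIV. \<Sum>j\<in>UNIV. A$i$j * (x$i \<bullet> y$j))"
    by (simp add: inner_vec_def Tb_nth inner_sum_right)
  also have "\<dots> = (\<Sum>j\<in>UNIV. \<Sum>i\<in>UNIV. A$i$j * (x$i \<bullet> y$j))" by (rule sum.swap)
  also have "\<dots> = Tb A x \<bullet> y"
    by (simp add: inner_vec_def Tb_nth inner_sum_left sym_entry[OF assms, of _ j for j])
  finally show ?thesis .
qed

lemma Tb_mult: "Tb (A ** B) x = Tb A (Tb B x)"
proof -
  have "Tb (A ** B) x $ i = Tb A (Tb B x) $ i" for i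
  proof -
    have "Tb (A ** B) x $ i = (\<Sum>j\<in>UNIV. \<Sum>k\<in>UNIV. (A$i$k * B$k$j) *\<^sub>R x$j)"
      by (simp add: Tb_nth matrix_matrix_mult_def scaleR_sum_left)
    also have "\<dots> = (\<Sum>k\<in>UNIV. \<Sum>j\<in>UNIV. (A$i$k * B$k$j) *\<^sub>R x$j)" by (rule sum.swap)
    also have "\<dots> = Tb A (Tb B x) $ i"
      by (simp add: Tb_nth scaleR_sum_right)
    finally show ?thesis .
  qed
  then show ?thesis by (simp add: vec_eq_iff)
qed

lemma Tb_mat1: 
  fixes x :: "'a::real_vector^'n"
  shows "Tb (mat 1) x = x"
proof -
  have "(\<Sum>j\<in>UNIV. (mat 1 :: real^'n^'n) $ i $ j *\<^sub>R x$j) = (\<Sum>j\<in>UNIV. if i = j then x$j else 0)" for i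
    by (rule sum.cong) (auto simp: mat_def)
  then have "(\<Sum>j\<in>UNIV. (mat 1 :: real^'n^'n) $ i $ j *\<^sub>R x$j) = x $ i" for i
    by simp
  then show ?thesis by (simp add: vec_eq_iff Tb_nth)
qed

lemma Tb_matpow: "Tb (matpow A t) x = (Tb A ^^ t) x"
  by (induction t arbitrary: x) (simp_all add: Tb_mat1 Tb_mult)

lemma matpow_comm: "matpow A t ** A = A ** matpow A t"
proof (induction t)
  case (Suc t)
  have "matpow A (Suc t) ** A = A ** (matpow A t ** A)" by (simp add: matrix_mul_assoc[symmetric])
  also have "\<dots> = A ** matpow A (Suc t)" using Suc by simp
  finally show ?case .
qed simp

lemma matpow_sym: "transpose A = A \<Longrightarrow> transpose (matpow A t) = matpow A t"
  by (induction t) (simp_all add: matrix_transpose_mul matpow_comm)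

lemma Tb_coord:
  fixes x :: "'a::real_inner^'n"
  shows "(\<chi> i. Tb A x $ i \<bullet> b) = A *v (\<chi> i. x$i \<bullet> b)"
  by (simp add: vec_eq_iff Tb_nth matrix_vector_mult_def inner_sum_left)

lemma mat_sym_inner:
  fixes A :: "real^'n^'n"
  assumes "transpose A = A"
  shows "x \<bullet> (A *v y) = (A *v x) \<bullet> y"
proof -
  have "x \<bullet> (A *v y) = (\<Sum>i\<in>UNIV. \<Sum>j\<in>UNIV. A$i$j * x$i * y$j)"
    by (simp add: inner_vec_def matrix_vector_mult_def sum_distrib_left algebra_simps)
  also have "\<dots> = (\<Sum>j\<in>UNIV. \<Sum>i\<in>UNIV. A$i$j * x$i * y$j)" by (rule sum.swap)
  also have "\<dots> = (A *v x) \<bullet> y"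
  proof -
    have r: "(A *v x) $ j = (\<Sum>i\<in>UNIV. A$i$j * x$i)" for j
      by (auto intro!: sum.cong simp: matrix_vector_mult_def sym_entry[OF assms, of j])
    show ?thesis by (simp add: inner_vec_def r sum_distrib_left algebra_simps)
  qed
  finally show ?thesis .
qed

lemma eig_finite:
  fixes A :: "real^'n^'n"
  assumes sym: "transpose A = A"
  shows "finite {l. mat_eigenvalue A l}"
proof -
  define E where "E = {l. mat_eigenvalue A l}"
  define ev where "ev l = (SOME v. v \<noteq> 0 \<and> A *v v = l *\<^sub>R v)" for l
  have ev: "ev l \<noteq> 0 \<and> A *v ev l = l *\<^sub>R ev l" if "l \<in> E" for l
  proof -
    from that have "\<exists>v. v \<noteq> 0 \<and> A *v v = l *\<^sub>R v" unfolding E_def mat_eigenvalue_def by simp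
    then show ?thesis unfolding ev_def by (rule someI_ex)
  qed
  have inj: "inj_on ev E"
  proof (rule inj_onI)
    fix l m assume lm: "l \<in> E" "m \<in> E" "ev l = ev m"
    have "l *\<^sub>R ev l = A *v ev l" using ev[OF lm(1)] by simp
    also have "\<dots> = A *v ev m" using lm(3) by simp
    also have "\<dots> = m *\<^sub>R ev m" using ev[OF lm(2)] by simp
    also have "\<dots> = m *\<^sub>R ev l" using lm(3) by simp
    finally have "l *\<^sub>R ev l = m *\<^sub>R ev l" .
    then show "l = m" using ev[OF lm(1)] by (simp add: scaleR_cancel_right)
  qed
  have orth: "pairwise orthogonal (ev ` E)"
  proof (rule pairwiseI)
    fix u w assume "u \<in> ev ` E" "w \<in> ev ` E" "u \<noteq> w"
    then obtain l m where lm: "l \<in> E" "m \<in> E" "u = ev l" "w = ev m" "l \<noteq> m" by auto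
    have "l * (u \<bullet> w) = (A *v u) \<bullet> w" using ev[OF lm(1)] lm by simp
    also have "\<dots> = u \<bullet> (A *v w)" using mat_sym_inner[OF sym] by simp
    also have "\<dots> = m * (u \<bullet> w)" using ev[OF lm(2)] lm by simp
    finally have "(l - m) * (u \<bullet> w) = 0" by (simp add: algebra_simps)
    then show "orthogonal u w" using lm by (simp add: orthogonal_def)
  qed
  have "0 \<notin> ev ` E" using ev by auto
  then have "independent (ev ` E)" using pairwise_orthogonal_independent orth by blast
  then have "finite (ev ` E)" by (rule finiteI_independent)
  then show ?thesis using finite_imageD inj unfolding E_def by blast
qed

lemma block_eig:
  fixes z :: "'a::euclidean_space^'n"
  assumes "Tb A z = l *\<^sub>R z" "z \<noteq> 0"
  shows "\<exists>u b. u \<noteq> 0 \<and> A *v u = l *\<^sub>R u \<and> b \<in> Basis \<and> u = (\<chi> i. z$i \<bullet> b)"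
proof -
  obtain i where i: "z $ i \<noteq> 0" using assms(2) by (auto simp: vec_eq_iff)
  then obtain b where b: "b \<in> Basis" "z$i \<bullet> b \<noteq> 0" using euclidean_all_zero_iff by blast
  define u where "u = (\<chi> i. z$i \<bullet> b)"
  have u0: "u \<noteq> 0" using b unfolding u_def by (auto simp: vec_eq_iff intro!: exI[of _ i])
  have "A *v u = (\<chi> i. Tb A z $ i \<bullet> b)" unfolding u_def by (simp add: Tb_coord)
  also have "\<dots> = l *\<^sub>R u" unfolding assms(1) u_def by (simp add: vec_eq_iff)
  finally have e: "A *v u = l *\<^sub>R u" .
  show ?thesis
    by (rule exI[of _ u], rule exI[of _ b]) (intro conjI u0 e b(1) u_def)
qed

lemma sq_eig:
  fixes W :: "real^'n::finite^'n" and S :: "('a::euclidean_space^'n) set"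
  assumes sym: "transpose W = W" and S: "subspace S" and inv: "\<And>x. x \<in> S \<Longrightarrow> Tb W x \<in> S"
    and x0: "x0 \<in> S" "x0 \<noteq> 0"
  shows "\<exists>z l. z \<in> S \<and> z \<noteq> 0 \<and> Tb W z = l *\<^sub>R z \<and> (\<forall>x\<in>S. norm (Tb W x) \<le> \<bar>l\<bar> * norm x)"
proof -
  let ?T = "\<lambda>x. Tb W (Tb W x)"
  have lin: "linear ?T" by (rule linearI) (simp_all add: Tb_add Tb_scale)
  have sa: "x \<bullet> ?T y = ?T x \<bullet> y" for x y
    using Tb_selfadj[OF sym] by metis
  obtain v where vS: "v \<in> S" and nv: "norm v = 1" and ev: "?T v = (v \<bullet> ?T v) *\<^sub>R v"
    and bd: "\<forall>x\<in>S. x \<bullet> ?T x \<le> (v \<bullet> ?T v) * (norm x)\<^sup>2"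
    using rayleigh_max[OF lin sa S _ x0] inv by blast
  define M where "M = v \<bullet> ?T v"
  have xT: "x \<bullet> ?T x = (norm (Tb W x))\<^sup>2" for x
    using Tb_selfadj[OF sym, of x "Tb W x"] by (simp add: power2_norm_eq_inner)
  have M0: "M \<ge> 0" unfolding M_def xT by simp
  define r where "r = sqrt M"
  have rr: "r * r = M" "r \<ge> 0" unfolding r_def using M0 by auto
  have bound: "\<forall>x\<in>S. norm (Tb W x) \<le> r * norm x"
  proof
    fix x assume xS: "x \<in> S"
    have "x \<bullet> ?T x \<le> M * (norm x)\<^sup>2" using bspec[OF bd xS] unfolding M_def .
    then have "(norm (Tb W x))\<^sup>2 \<le> M * (norm x)\<^sup>2" using xT[of x] by linarith
    then have "sqrt ((norm (Tb W x))\<^sup>2) \<le> sqrt (M * (norm x)\<^sup>2)" by (rule real_sqrt_le_mono)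
    then show "norm (Tb W x) \<le> r * norm x" unfolding r_def by (simp add: real_sqrt_mult)
  qed
  define u where "u = Tb W v + r *\<^sub>R v"
  have uS: "u \<in> S" unfolding u_def using vS inv S by (simp add: subspace_add subspace_scale)
  have Tu: "Tb W u = r *\<^sub>R u"
  proof -
    have "Tb W u = ?T v + r *\<^sub>R Tb W v" unfolding u_def by (simp add: Tb_add Tb_scale)
    also have "\<dots> = M *\<^sub>R v + r *\<^sub>R Tb W v" using ev unfolding M_def by simp
    also have "\<dots> = r *\<^sub>R u" unfolding u_def using rr by (simp add: algebra_simps flip: rr(1))
    finally show ?thesis .
  qed
  show ?thesis
  proof (cases "u = 0")
    case False
    then show ?thesis using uS Tu bound rr by (intro exI[of _ u] exI[of _ r]) auto
  next
    case True
    then have "Tb W v = (- r) *\<^sub>R v" unfolding u_def by (simp add: add_eq_0_iff)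
    moreover have "v \<noteq> 0" using nv by auto
    ultimately show ?thesis using vS bound rr by (intro exI[of _ v] exI[of _ "-r"]) auto
  qed
qed

definition S0 :: "('a::real_vector^'n::finite) set" where "S0 = {x. (\<Sum>i\<in>UNIV. x$i) = 0}"

lemma S0_subspace: "subspace S0"
  unfolding S0_def subspace_def by (simp add: sum.distrib scaleR_sum_right[symmetric])

lemma Tb_sum:
  assumes col: "\<And>j. (\<Sum>i\<in>UNIV. A$i$j) = 1"
  shows "(\<Sum>i\<in>UNIV. Tb A x $ i) = (\<Sum>i\<in>UNIV. x$i)"
proof -
  have "(\<Sum>i\<in>UNIV. Tb A x $ i) = (\<Sum>j\<in>UNIV. \<Sum>i\<in>UNIV. A$i$j *\<^sub>R x$j)"
    unfolding Tb_nth by (rule sum.swap)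
  also have "\<dots> = (\<Sum>j\<in>UNIV. x$j)" by (simp add: scaleR_sum_left[symmetric] col)
  finally show ?thesis .
qed

lemma Tb_const:
  assumes row: "\<And>i. (\<Sum>j\<in>UNIV. A$i$j) = 1"
  shows "Tb A (\<chi> i. c) = (\<chi> i. c)"
  by (simp add: vec_eq_iff Tb_nth scaleR_sum_left[symmetric] row)

lemma nonzero_block: "\<exists>x::'a::euclidean_space^'n::finite. x \<noteq> 0"
proof -
  obtain b :: 'a where "b \<in> Basis" using nonempty_Basis by blast
  then have "b \<noteq> 0" by (auto simp: nonzero_Basis)
  then show ?thesis by (intro exI[of _ "\<chi> i. b"]) (simp add: vec_eq_iff)
qed

lemma col_sum:
  assumes sym: "transpose W = W" and row: "\<forall>i. (\<Sum>j\<in>UNIV. W $ i $ j) = 1"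
  shows "(\<Sum>i\<in>UNIV. W$i$j) = 1"
proof -
  have "(\<Sum>i\<in>UNIV. W$i$j) = (\<Sum>i\<in>UNIV. W$j$i)" by (rule sum.cong) (auto simp: sym_entry[OF sym, of _ j])
  then show ?thesis using row by simp
qed

lemma TW_nonexp:
  fixes W :: "real^'n::finite^'n" and x :: "'a::euclidean_space^'n"
  assumes sym: "transpose W = W"
    and eigs: "\<forall>l. mat_eigenvalue W l \<and> l \<noteq> 1 \<longrightarrow> -1 < l \<and> l < 1"
  shows "norm (Tb W x) \<le> norm x"
proof (cases "x = 0")
  case True then show ?thesis by (simp add: Tb_zero)
next
  case False
  have "\<exists>(z::'a^'n) l. z \<in> UNIV \<and> z \<noteq> 0 \<and> Tb W z = l *\<^sub>R z \<and> (\<forall>y\<in>UNIV. norm (Tb W y) \<le> \<bar>l\<bar> * norm (y::'a^'n))"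
    by (rule sq_eig[OF sym subspace_UNIV _ UNIV_I False]) simp
  then obtain z l where z: "(z::'a^'n) \<noteq> 0" "Tb W z = l *\<^sub>R z" and bd: "\<And>y. norm (Tb W y) \<le> \<bar>l\<bar> * norm (y::'a^'n)"
    by auto
  have "\<exists>u b. u \<noteq> 0 \<and> W *v u = l *\<^sub>R u \<and> b \<in> Basis \<and> u = (\<chi> i. z$i \<bullet> b)"
    by (rule block_eig[OF z(2) z(1)])
  then have "mat_eigenvalue W l" unfolding mat_eigenvalue_def by auto
  then have "\<bar>l\<bar> \<le> 1" using eigs by (cases "l = 1") auto
  then have "\<bar>l\<bar> * norm x \<le> norm x" by (simp add: mult_left_le_one_le)
  then show ?thesis using bd[of x] by linarith
qed

lemma TW_contr:
  fixes W :: "real^'n::finite^'n" and x :: "'a::euclidean_space^'n"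
  assumes sym: "transpose W = W" and row: "\<forall>i. (\<Sum>j\<in>UNIV. W $ i $ j) = 1"
    and simple1: "\<forall>v. W *v v = v \<longrightarrow> (\<exists>c. v = (\<chi> i. c))"
    and x: "x \<in> S0"
  shows "norm (Tb W x) \<le> second_eig_mag W * norm x"
proof (cases "x = 0")
  case True then show ?thesis by (simp add: Tb_zero)
next
  case False
  have inv: "Tb W y \<in> S0" if "y \<in> S0" for y :: "'a^'n"
    using that Tb_sum[of W y] col_sum[OF sym row] unfolding S0_def by simp
  have "\<exists>(z::'a^'n) l. z \<in> S0 \<and> z \<noteq> 0 \<and> Tb W z = l *\<^sub>R z \<and> (\<forall>y\<in>S0. norm (Tb W y) \<le> \<bar>l\<bar> * norm (y::'a^'n))"
    by (rule sq_eig[OF sym S0_subspace inv x False])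
  then obtain z l where z: "(z::'a^'n) \<in> S0" "z \<noteq> 0" "Tb W z = l *\<^sub>R z" and bd: "\<forall>y\<in>S0. norm (Tb W y) \<le> \<bar>l\<bar> * norm (y::'a^'n)"
    by auto
  have "\<exists>u b. u \<noteq> 0 \<and> W *v u = l *\<^sub>R u \<and> b \<in> Basis \<and> u = (\<chi> i. z$i \<bullet> b)"
    by (rule block_eig[OF z(3) z(2)])
  then obtain u b where u: "u \<noteq> 0" "W *v u = l *\<^sub>R u" "b \<in> Basis" "u = (\<chi> i. z$i \<bullet> b)"
    by auto
  have su: "(\<Sum>i\<in>UNIV. u$i) = 0"
  proof -
    have "(\<Sum>i\<in>UNIV. u$i) = (\<Sum>i\<in>UNIV. z$i) \<bullet> b" using u(4) by (simp add: inner_sum_left)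
    then show ?thesis using z(1) unfolding S0_def by simp
  qed
  have l1: "l \<noteq> 1"
  proof
    assume "l = 1"
    then have "W *v u = u" using u by simp
    then obtain c where c: "u = (\<chi> i. c)" using simple1 by blast
    then have "real CARD('n) * c = 0" using su by simp
    then have "c = 0" by simp
    then show False using u(1) c by (simp add: vec_eq_iff)
  qed
  have me: "mat_eigenvalue W l" unfolding mat_eigenvalue_def using u(1,2) by auto
  have fin: "finite {\<bar>l\<bar> | l. mat_eigenvalue W l \<and> l \<noteq> 1}"
  proof -
    have "{\<bar>l\<bar> | l. mat_eigenvalue W l \<and> l \<noteq> 1} \<subseteq> abs ` {l. mat_eigenvalue W l}" by auto
    then show ?thesis using eig_finite[OF sym] finite_subset by blast
  qed
  have "\<bar>l\<bar> \<le> second_eig_mag W" unfolding second_eig_mag_def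
    using me l1 by (intro Max_ge[OF fin]) auto
  then have "\<bar>l\<bar> * norm x \<le> second_eig_mag W * norm x" by (simp add: mult_right_mono)
  then show ?thesis using bspec[OF bd x] by linarith
qed

lemma lam_bound:
  fixes A :: "real^'n::finite^'n" and y :: "'a::euclidean_space^'n"
  assumes sym: "transpose A = A"
  shows "lambda_min A * (norm y)\<^sup>2 \<le> y \<bullet> Tb A y"
proof -
  let ?T = "\<lambda>x::'a^'n. - Tb A x"
  have lin: "linear ?T" by (rule linearI) (simp_all add: Tb_add Tb_scale)
  have sa: "x \<bullet> ?T z = ?T x \<bullet> z" for x z using Tb_selfadj[OF sym, of x z] by simp
  obtain x0 :: "'a^'n" where x0: "x0 \<noteq> 0" using nonzero_block by blast
  have "\<exists>v\<in>(UNIV::('a^'n) set). norm v = 1 \<and> ?T v = (v \<bullet> ?T v) *\<^sub>R v \<and> (\<forall>x\<in>UNIV. x \<bullet> ?T x \<le> (v \<bullet> ?T v) * (norm x)\<^sup>2)"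
    by (rule rayleigh_max[OF lin sa subspace_UNIV _ UNIV_I x0]) simp
  then obtain v :: "'a^'n" where nv: "norm v = 1" and ev: "?T v = (v \<bullet> ?T v) *\<^sub>R v"
    and bd: "\<And>x. x \<bullet> ?T x \<le> (v \<bullet> ?T v) * (norm x)\<^sup>2" by auto
  define M where "M = v \<bullet> ?T v"
  have ev2: "Tb A v = (- M) *\<^sub>R v" using ev unfolding M_def by (simp add: minus_equation_iff)
  have v0: "v \<noteq> 0" using nv by auto
  have "\<exists>u b. u \<noteq> 0 \<and> A *v u = (-M) *\<^sub>R u \<and> b \<in> Basis \<and> u = (\<chi> i. v$i \<bullet> b)"
    by (rule block_eig[OF ev2 v0])
  then have me: "mat_eigenvalue A (-M)" unfolding mat_eigenvalue_def by auto
  have "lambda_min A \<le> -M" unfolding lambda_min_def using me by (intro Min_le[OF eig_finite[OF sym]]) simp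
  then have "lambda_min A * (norm y)\<^sup>2 \<le> (-M) * (norm y)\<^sup>2" by (intro mult_right_mono) auto
  also have "\<dots> \<le> y \<bullet> Tb A y" using bd[of y] unfolding M_def[symmetric] by simp
  finally show ?thesis .
qed

lemma Q_expand:
  fixes T :: "'v::real_inner \<Rightarrow> 'v"
  assumes lin: "linear T" and sa: "\<And>x z. x \<bullet> T z = T x \<bullet> z"
  shows "(y - d) \<bullet> (y - d) - (y - d) \<bullet> T (y - d) = (y \<bullet> y - y \<bullet> T y) - 2 * (d \<bullet> (y - T y)) + (d \<bullet> d - d \<bullet> T d)"
proof -
  have Td: "T (y - d) = T y - T d" using lin by (simp add: linear_diff)
  have s: "y \<bullet> T d = d \<bullet> T y" using sa[of y d] by (simp add: inner_commute)
  show ?thesis unfolding Td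
    by (simp add: inner_diff_left inner_diff_right inner_commute[of d y] s algebra_simps)
qed

lemma dev_norm:
  fixes y :: "'a::real_inner^'n::finite"
  defines "m \<equiv> (1 / real CARD('n)) *\<^sub>R (\<Sum>i\<in>UNIV. y$i)"
  shows "norm (y - (\<chi> i. m)) \<le> norm y"
proof -
  have N: "real CARD('n) > 0" by simp
  have s: "(\<Sum>i\<in>UNIV. y$i) = real CARD('n) *\<^sub>R m" unfolding m_def using N by simp
  have orth: "(y - (\<chi> i. m)) \<bullet> (\<chi> i. m) = 0"
    by (simp add: inner_vec_def inner_diff_left sum_subtractf inner_sum_left[symmetric] s)
  have "(norm ((y - (\<chi> i. m)) + (\<chi> i. m)))\<^sup>2 = (norm (y - (\<chi> i. m)))\<^sup>2 + (norm (\<chi> i. m::'a^'n))\<^sup>2"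
    by (rule norm_add_Pythagorean) (simp add: orthogonal_def orth)
  then have "(norm y)\<^sup>2 = (norm (y - (\<chi> i. m)))\<^sup>2 + (norm (\<chi> i. m::'a^'n))\<^sup>2" by simp
  then have "(norm (y - (\<chi> i. m)))\<^sup>2 \<le> (norm y)\<^sup>2"
    using zero_le_power2[of "norm (\<chi> i. m::'a^'n)"] by linarith
  then show ?thesis by (rule power2_le_imp_le) (rule norm_ge_zero)
qed

lemma norm_sq_vec: "(norm (y::'a::real_inner^'n::finite))\<^sup>2 = (\<Sum>i\<in>UNIV. (norm (y$i))\<^sup>2)"
  by (simp add: power2_norm_eq_inner inner_vec_def)

lemma aux_mono: "a' \<le> a \<Longrightarrow> b \<le> b' \<Longrightarrow> w - a + b \<le> w - a' + (b'::real)"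
  by linarith

lemma aux_id: "S \<noteq> 0 \<Longrightarrow> w - 2*a*((q + m*l*w)/S) + a*(2/S)*q = (1 - a*(2*m*l/S))*(w::real)"
  by (simp add: field_simps)

lemma gd_contract:
  fixes F :: "'v::euclidean_space \<Rightarrow> real" and G :: "'v \<Rightarrow> 'v"
  assumes der: "\<And>x. (F has_derivative (\<lambda>y. G x \<bullet> y)) (at x)"
    and lip: "\<And>x y. norm (G x - G y) \<le> Lf * norm (x - y)"
    and sc: "convex_on UNIV (\<lambda>x. F x - mu/2 * (norm x)\<^sup>2)"
    and mu: "mu > 0" and Lf: "Lf > 0" and Gs: "G xs = 0"
    and a: "alpha > 0" "alpha \<le> 2 / (mu + Lf)"
  shows "(norm (y - alpha *\<^sub>R G y - xs))\<^sup>2 \<le> (1 - alpha * (2 * mu * Lf / (mu + Lf))) * (norm (y - xs))\<^sup>2"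
proof -
  define \<phi> where "\<phi> x = F x - mu/2 * (norm x)\<^sup>2" for x
  define P where "P x = G x - mu *\<^sub>R x" for x
  have derphi: "(\<phi> has_derivative (\<lambda>z. P x \<bullet> z)) (at x)" for x
  proof -
    have "((\<lambda>x. F x - mu/2 * (x \<bullet> x)) has_derivative (\<lambda>z. G x \<bullet> z - mu/2 * (x \<bullet> z + z \<bullet> x))) (at x)"
      by (rule derivative_eq_intros der refl)+
    moreover have "(\<lambda>z. G x \<bullet> z - mu/2 * (x \<bullet> z + z \<bullet> x)) = (\<lambda>z. P x \<bullet> z)"
      unfolding P_def by (auto simp: inner_diff_left inner_commute algebra_simps)
    moreover have "\<phi> = (\<lambda>x. F x - mu/2 * (x \<bullet> x))" unfolding \<phi>_def by (simp add: power2_norm_eq_inner)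
    ultimately show ?thesis by simp
  qed
  have low: "\<phi> x + P x \<bullet> (z - x) \<le> \<phi> z" for x z
    by (rule convex_tangent[OF sc[folded \<phi>_def] derphi])
  have up: "\<phi> z \<le> \<phi> x + P x \<bullet> (z - x) + (Lf - mu)/2 * (norm (z - x))\<^sup>2" for x z
  proof -
    have nz: "(norm (z - x))\<^sup>2 = z \<bullet> z - 2 * (x \<bullet> z) + x \<bullet> x"
      by (simp add: power2_norm_eq_inner inner_diff_left inner_diff_right inner_commute)
    have FZ: "F z \<le> F x + G x \<bullet> (z - x) + Lf/2 * (z \<bullet> z - 2 * (x \<bullet> z) + x \<bullet> x)"
      using descent[OF der lip, of z x] unfolding nz .
    have Pxz: "P x \<bullet> (z - x) = G x \<bullet> (z - x) - mu * (x \<bullet> z) + mu * (x \<bullet> x)"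
      unfolding P_def by (simp add: inner_diff_left inner_diff_right)
    have e1: "\<phi> z = F z - mu/2*(z \<bullet> z)" "\<phi> x = F x - mu/2*(x \<bullet> x)"
      unfolding \<phi>_def by (simp_all add: power2_norm_eq_inner)
    have e2: "G x \<bullet> (z - x) = G x \<bullet> z - G x \<bullet> x" by (simp add: inner_diff_right)
    have e3g: "(Lf - mu)/2 * (cc - 2*aa + bb) = Lf/2 * (cc - 2*aa + bb) - mu/2*cc + mu*aa - mu/2*bb" for aa bb cc :: real
      by (simp add: field_simps)
    note e3 = e3g[where aa="x \<bullet> z" and bb="x \<bullet> x" and cc="z \<bullet> z"]
    show ?thesis unfolding nz e1 Pxz e2 using FZ[unfolded e2] e3 by linarith
  qed
  have K: "Lf - mu \<ge> 0"
  proof -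
    obtain b :: 'v where b: "b \<in> Basis" using nonempty_Basis by blast
    have "\<phi> 0 + P 0 \<bullet> (b - 0) \<le> \<phi> 0 + P 0 \<bullet> (b - 0) + (Lf - mu)/2 * (norm (b - 0))\<^sup>2"
      using low[of 0 b] up[of b 0] by linarith
    then have "0 \<le> (Lf - mu) * (norm b)\<^sup>2" by simp
    moreover have "(norm b)\<^sup>2 > 0" using b by (simp add: nonzero_Basis)
    ultimately show ?thesis by (simp add: zero_le_mult_iff)
  qed
  have cc: "(norm (P y - P xs))\<^sup>2 \<le> (Lf - mu) * ((P y - P xs) \<bullet> (y - xs))"
    by (rule cocoercive[OF low up K])
  define u where "u = y - xs"
  define D where "D = G y"
  have PD: "P y - P xs = D - mu *\<^sub>R u" unfolding P_def D_def u_def using Gs by (simp add: algebra_simps)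
  define p where "p = D \<bullet> u"
  define q where "q = D \<bullet> D"
  define w where "w = u \<bullet> u"
  have q0: "q \<ge> 0" unfolding q_def by simp
  have "(norm (D - mu *\<^sub>R u))\<^sup>2 = q - 2 * mu * p + mu\<^sup>2 * w"
    unfolding p_def q_def w_def power2_norm_eq_inner
    by (simp add: inner_diff_left inner_diff_right inner_commute power2_eq_square algebra_simps)
  moreover have "(D - mu *\<^sub>R u) \<bullet> u = p - mu * w" unfolding p_def w_def by (simp add: inner_diff_left)
  ultimately have "q - 2 * mu * p + mu\<^sup>2 * w \<le> (Lf - mu) * (p - mu * w)"
    using cc unfolding PD u_def[symmetric] by simp
  then have key: "(mu + Lf) * p \<ge> q + mu * Lf * w" by (simp add: algebra_simps power2_eq_square)
  have S: "mu + Lf > 0" using mu Lf by simp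
  have p1: "p \<ge> (q + mu * Lf * w) / (mu + Lf)" using key S by (simp add: field_simps)
  have t1: "2 * alpha * p \<ge> 2 * alpha * ((q + mu * Lf * w) / (mu + Lf))"
    using p1 a by (intro mult_left_mono) auto
  have t2: "alpha * alpha * q \<le> alpha * (2 / (mu + Lf)) * q"
    using a q0 by (intro mult_right_mono mult_left_mono) auto
  have "(norm (y - alpha *\<^sub>R G y - xs))\<^sup>2 = w - 2 * alpha * p + alpha * alpha * q"
  proof -
    have e: "y - alpha *\<^sub>R G y - xs = u - alpha *\<^sub>R D" unfolding u_def D_def by simp
    show ?thesis unfolding e power2_norm_eq_inner p_def q_def w_def
      by (simp add: inner_diff_left inner_diff_right inner_commute algebra_simps)
  qed
  also have "\<dots> \<le> w - 2 * alpha * ((q + mu * Lf * w) / (mu + Lf)) + alpha * (2 / (mu + Lf)) * q"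
    by (rule aux_mono[OF t1 t2])
  also have "\<dots> = (1 - alpha * (2 * mu * Lf / (mu + Lf))) * w"
    using S by (intro aux_id) simp
  finally show ?thesis unfolding w_def u_def power2_norm_eq_inner .
qed

lemma TW_S0:
  fixes W :: "real^'n::finite^'n"
  assumes sym: "transpose W = W" and row: "\<forall>i. (\<Sum>j\<in>UNIV. W $ i $ j) = 1"
  shows "y \<in> S0 \<Longrightarrow> (Tb W ^^ t) (y::'a::real_vector^'n) \<in> S0"
proof (induction t)
  case (Suc t)
  then show ?case using Tb_sum[of W "(Tb W ^^ t) y"] col_sum[OF sym row] unfolding S0_def by simp
qed simp

lemma TA_nonexp:
  fixes W :: "real^'n::finite^'n" and y :: "'a::euclidean_space^'n"
  assumes sym: "transpose W = W"
    and eigs: "\<forall>l. mat_eigenvalue W l \<and> l \<noteq> 1 \<longrightarrow> -1 < l \<and> l < 1"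
  shows "norm (Tb (matpow W t) y) \<le> norm y"
  unfolding Tb_matpow
proof (induction t)
  case (Suc t)
  have "norm ((Tb W ^^ Suc t) y) \<le> norm ((Tb W ^^ t) y)" using TW_nonexp[OF sym eigs] by simp
  then show ?case using Suc by linarith
qed simp

lemma TA_contr:
  fixes W :: "real^'n::finite^'n" and y :: "'a::euclidean_space^'n"
  assumes sym: "transpose W = W" and row: "\<forall>i. (\<Sum>j\<in>UNIV. W $ i $ j) = 1"
    and simple1: "\<forall>v. W *v v = v \<longrightarrow> (\<exists>c. v = (\<chi> i. c))"
    and bpos: "0 \<le> second_eig_mag W" and y: "y \<in> S0"
  shows "norm (Tb (matpow W t) y) \<le> second_eig_mag W ^ t * norm y"
  unfolding Tb_matpow
proof (induction t)
  case (Suc t)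
  have "norm ((Tb W ^^ Suc t) y) \<le> second_eig_mag W * norm ((Tb W ^^ t) y)"
    using TW_contr[OF sym row simple1 TW_S0[OF sym row y]] by simp
  also have "\<dots> \<le> second_eig_mag W * (second_eig_mag W ^ t * norm y)"
    using Suc bpos by (intro mult_left_mono) auto
  finally show ?case by simp
qed simp

lemma TA_sum:
  fixes W :: "real^'n::finite^'n"
  assumes sym: "transpose W = W" and row: "\<forall>i. (\<Sum>j\<in>UNIV. W $ i $ j) = 1"
  shows "(\<Sum>i\<in>UNIV. Tb (matpow W t) y $ i) = (\<Sum>i\<in>UNIV. (y::'a::real_vector^'n) $ i)"
  unfolding Tb_matpow
proof (induction t)
  case (Suc t)
  then show ?case using Tb_sum[of W "(Tb W ^^ t) y"] col_sum[OF sym row] by simp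
qed simp

lemma TA_const:
  fixes W :: "real^'n::finite^'n"
  assumes row: "\<forall>i. (\<Sum>j\<in>UNIV. W $ i $ j) = 1"
  shows "Tb (matpow W t) (\<chi> i. v) = (\<chi> i. (v::'a::real_vector))"
  unfolding Tb_matpow
proof (induction t)
  case (Suc t)
  then show ?case using Tb_const[of W v] row by simp
qed simp

lemma young:
  fixes a b :: "'v::real_inner"
  assumes e: "e > 0"
  shows "(norm (a + b))\<^sup>2 \<le> (1 + e) * (norm a)\<^sup>2 + (1 + 1/e) * (norm b)\<^sup>2"
proof -
  have "2 * (a \<bullet> b) \<le> 2 * (norm a * norm b)" using norm_cauchy_schwarz[of a b] by simp
  also have "\<dots> \<le> e * (norm a)\<^sup>2 + (norm b)\<^sup>2 / e"
  proof -
    have "0 \<le> (e * norm a - norm b)\<^sup>2" by simp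
    then have "2 * e * (norm a * norm b) \<le> e * (e * (norm a)\<^sup>2) + (norm b)\<^sup>2"
      by (simp add: power2_eq_square algebra_simps)
    then show ?thesis using e by (simp add: field_simps power2_eq_square)
  qed
  finally have "2 * (a \<bullet> b) \<le> e * (norm a)\<^sup>2 + (norm b)\<^sup>2 / e" .
  moreover have "(norm (a + b))\<^sup>2 = (norm a)\<^sup>2 + 2 * (a \<bullet> b) + (norm b)\<^sup>2"
    by (simp add: power2_norm_eq_inner inner_add_left inner_add_right inner_commute)
  ultimately show ?thesis by (simp add: algebra_simps)
qed

lemma rec_step:
  fixes c s E P r r' :: real
  assumes c: "0 \<le> c" "c \<le> 1" and s: "s > 0" "s\<^sup>2 = 1 - c\<^sup>2" and E: "E \<ge> 0" and P: "P \<ge> 0"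
    and r: "0 \<le> r" "r \<le> P + E/s" and r': "r'\<^sup>2 \<le> c\<^sup>2 * r\<^sup>2 + E\<^sup>2"
  shows "r' \<le> c * P + E/s"
proof -
  have "c\<^sup>2 * r\<^sup>2 \<le> c\<^sup>2 * (P + E/s)\<^sup>2"
    using r by (intro mult_left_mono power_mono) auto
  moreover have "c\<^sup>2 * (P + E/s)\<^sup>2 + E\<^sup>2 = (c * P + E/s)\<^sup>2 - 2 * c * P * E * (1 - c) / s"
  proof -
    have g: "c\<^sup>2 * (P + E/s)\<^sup>2 + E\<^sup>2 = (c * P + E/s)\<^sup>2 - 2 * c * P * E * (1 - c) / s + E\<^sup>2 * (s\<^sup>2 + c\<^sup>2 - 1) / s\<^sup>2"
      using s(1) by (simp add: field_simps power2_eq_square)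
    have "s\<^sup>2 + c\<^sup>2 - 1 = 0" using s(2) by simp
    then show ?thesis using g by simp
  qed
  moreover have "2 * c * P * E * (1 - c) / s \<ge> 0" using c s E P by simp
  ultimately have "r'\<^sup>2 \<le> (c * P + E/s)\<^sup>2" using r' by linarith
  moreover have "c * P + E/s \<ge> 0" using c s E P by simp
  ultimately show ?thesis by (rule power2_le_imp_le)
qed

theorem corollary1:
  fixes W :: "real^'n::finite^'n"
    and f :: "'n \<Rightarrow> 'a::euclidean_space \<Rightarrow> real"
    and g :: "'n \<Rightarrow> 'a \<Rightarrow> 'a"
    and Li :: "'n \<Rightarrow> real"
    and t :: nat and alpha mu_h :: real and xstar :: 'a
  assumes W_sym: "transpose W = W"
    and W_nonneg: "\<forall>i j. W $ i $ j \<ge> 0"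
    and W_stoch: "\<forall>i. (\<Sum>j\<in>UNIV. W $ i $ j) = 1"
    and W_diag: "\<forall>i. W $ i $ i > 0"
    and W_conn: "\<forall>i j. (i, j) \<in> {(a, b). W $ a $ b > 0}\<^sup>*"
    and W_simple1: "\<forall>v. W *v v = v \<longrightarrow> (\<exists>c. v = (\<chi> i. c))"
    and W_eigs: "\<forall>l. mat_eigenvalue W l \<and> l \<noteq> 1 \<longrightarrow> -1 < l \<and> l < 1"
    and beta_pos: "0 < second_eig_mag W" and beta_lt1: "second_eig_mag W < 1"
    and t_pos: "t \<ge> 1"
    and f_conv: "\<forall>i. convex_on UNIV (f i)"
    and f_grad: "\<forall>i x. (f i has_derivative (\<lambda>y. g i x \<bullet> y)) (at x)"
    and f_lip: "\<forall>i x y. norm (g i x - g i y) \<le> Li i * norm (x - y)"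
    and f_min: "\<forall>i. \<exists>z. \<forall>x. f i z \<le> f i x"
    and mu_pos: "mu_h > 0"
    and h_sc: "strongly_convex mu_h (\<lambda>x. \<Sum>i\<in>UNIV. f i x)"
    and xstar_min: "\<forall>x. (\<Sum>i\<in>UNIV. f i xstar) \<le> (\<Sum>i\<in>UNIV. f i x)"
    and alpha_pos: "0 < alpha"
    and alpha_le1: "alpha \<le> (1 + lambda_min (matpow W t)) / Max (range Li)"
    and alpha_le2: "alpha \<le> 2 / (mu_h / CARD('n) + (\<Sum>i\<in>UNIV. Li i) / CARD('n))"
    and alpha_c2: "alpha * (2 * (mu_h / CARD('n)) * ((\<Sum>i\<in>UNIV. Li i) / CARD('n))
                     / (mu_h / CARD('n) + (\<Sum>i\<in>UNIV. Li i) / CARD('n))) < 1"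
  shows "\<forall>k i.
    (let L = Max (range Li);
         mu = mu_h / CARD('n);
         Lf = (\<Sum>i\<in>UNIV. Li i) / CARD('n);
         c2 = 2 * mu * Lf / (mu + Lf);
         D = sqrt (2 * L * (\<Sum>i\<in>UNIV. f i 0 - (INF x. f i x)));
         beta = second_eig_mag W;
         delta = c2 / (2 * (1 - alpha * c2));
         c1 = sqrt (1 - alpha * c2 / 2);
         c3 = sqrt (alpha ^ 3 * (alpha + 1 / delta)) * L * D
     in norm (dgd W t alpha g k i - xstar)
          \<le> c1 ^ k * norm xstar + c3 / (sqrt (1 - c1\<^sup>2) * (1 - beta ^ t))
             + alpha * D / (1 - beta ^ t))"
proof -
  define N where "N = real CARD('n)"
  have N: "N > 0" unfolding N_def by simp
  define A where "A = matpow W t"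
  define L where "L = Max (range Li)"
  define mu where "mu = mu_h / CARD('n)"
  define SL where "SL = (\<Sum>i\<in>UNIV. Li i)"
  define Lf where "Lf = (\<Sum>i\<in>UNIV. Li i) / CARD('n)"
  define c2 where "c2 = 2 * mu * Lf / (mu + Lf)"
  define fmin where "fmin i = (INF x. f i x)" for i
  define D where "D = sqrt (2 * L * (\<Sum>i\<in>UNIV. f i 0 - fmin i))"
  define beta where "beta = second_eig_mag W"
  define delta where "delta = c2 / (2 * (1 - alpha * c2))"
  define c1 where "c1 = sqrt (1 - alpha * c2 / 2)"
  define c3 where "c3 = sqrt (alpha ^ 3 * (alpha + 1 / delta)) * L * D"
  have row: "\<forall>i. (\<Sum>j\<in>UNIV. W $ i $ j) = 1" using W_stoch .
  have symA: "transpose A = A" unfolding A_def by (rule matpow_sym[OF W_sym])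
  obtain b0 :: 'a where b0: "b0 \<in> Basis" using nonempty_Basis by blast
  have nb0: "norm b0 = 1" using b0 by simp
  have Li0: "Li i \<ge> 0" for i
  proof -
    have "0 \<le> norm (g i b0 - g i 0)" by simp
    also have "\<dots> \<le> Li i * norm (b0 - 0)" using f_lip by blast
    finally show ?thesis using nb0 by simp
  qed
  have finL: "finite (range Li)" by simp
  have LiL: "Li i \<le> L" for i unfolding L_def by (rule Max_ge[OF finL]) simp
  have L0: "L \<ge> 0" using LiL[of undefined] Li0[of undefined] by linarith
  have lamA: "lambda_min A * (norm y)\<^sup>2 \<le> y \<bullet> Tb A y" for y :: "'a^'n"
    by (rule lam_bound[OF symA])
  have Lpos: "L > 0"
  proof (rule ccontr)
    assume "\<not> L > 0"
    then have "L = 0" using L0 by simp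
    then show False using alpha_le1 alpha_pos unfolding L_def A_def[symmetric] by simp
  qed
  have aL: "alpha * L \<le> 1 + lambda_min A"
    using alpha_le1 Lpos unfolding L_def[symmetric] A_def[symmetric] by (simp add: field_simps)
  have SL_ge: "SL \<ge> L"
  proof -
    have "L \<in> range Li" unfolding L_def by (rule Max_in[OF finL]) simp
    then obtain i where "L = Li i" by auto
    moreover have "Li i \<le> SL" unfolding SL_def by (rule member_le_sum) (auto intro: Li0)
    ultimately show ?thesis by simp
  qed
  have Lf_pos: "Lf > 0" unfolding Lf_def SL_def[symmetric] using SL_ge Lpos by simp
  have mu_pos: "mu > 0" unfolding mu_def using mu_pos by simp
  have c2_pos: "c2 > 0" unfolding c2_def using mu_pos Lf_pos by simp
  have ac2: "alpha * c2 < 1" using alpha_c2 unfolding c2_def mu_def Lf_def by simp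
  have lipL: "norm (g i x - g i y) \<le> L * norm (x - y)" for i x y
  proof -
    have "norm (g i x - g i y) \<le> Li i * norm (x - y)" using f_lip by blast
    also have "\<dots> \<le> L * norm (x - y)" using LiL[of i] by (intro mult_right_mono) auto
    finally show ?thesis .
  qed
  have der: "(f i has_derivative (\<lambda>y. g i x \<bullet> y)) (at x)" for i x using f_grad by blast
  have fmin_le: "fmin i \<le> f i x" for i x
  proof -
    obtain z where z: "\<forall>x. f i z \<le> f i x" using f_min by blast
    have "fmin i = f i z" unfolding fmin_def by (rule cInf_eq_minimum) (use z in auto)
    then show ?thesis using z by simp
  qed
  have beta_pos: "0 < beta" "beta < 1" using beta_pos beta_lt1 unfolding beta_def by auto
  have bt: "0 \<le> beta ^ t" "beta ^ t < 1"
    using beta_pos t_pos by (auto simp: power_less_one_iff)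
  define X where "X k = (\<chi> i. dgd W t alpha g k i)" for k
  define Gv where "Gv y = (\<chi> i. g i (y $ i))" for y :: "'a^'n"
  have X0: "X 0 = 0" unfolding X_def by (simp add: vec_eq_iff)
  have XS: "X (Suc k) = Tb A (X k) - alpha *\<^sub>R Gv (X k)" for k
    unfolding X_def Gv_def A_def by (simp add: vec_eq_iff Tb_nth)
  have Xi: "dgd W t alpha g k i = X k $ i" for k i unfolding X_def by simp
  define xi where "xi y = 1/2 * (y \<bullet> y - y \<bullet> Tb A y) + alpha * (\<Sum>i\<in>UNIV. f i (y$i))" for y :: "'a^'n"
  have linA: "linear (Tb A)" by (rule Tb_linear)
  have saA: "x \<bullet> Tb A z = Tb A x \<bullet> z" for x z :: "'a^'n" by (rule Tb_selfadj[OF symA])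
  have nonexpA: "norm (Tb A y) \<le> norm y" for y :: "'a^'n" unfolding A_def by (rule TA_nonexp[OF W_sym W_eigs])
  have xi_low: "alpha * (\<Sum>i\<in>UNIV. f i (y$i)) \<le> xi y" for y
  proof -
    have "y \<bullet> Tb A y \<le> norm y * norm (Tb A y)" by (rule norm_cauchy_schwarz)
    also have "\<dots> \<le> norm y * norm y" using nonexpA by (intro mult_left_mono) auto
    also have "\<dots> = y \<bullet> y" by (rule norm_mult_self)
    finally show ?thesis unfolding xi_def by simp
  qed
  have xi_desc: "xi (X (Suc k)) \<le> xi (X k)" for k
  proof -
    define y where "y = X k"
    define d where "d = y - Tb A y + alpha *\<^sub>R Gv y"
    have Xs: "X (Suc k) = y - d" unfolding XS d_def y_def by simp
    have Q: "(y - d) \<bullet> (y - d) - (y - d) \<bullet> Tb A (y - d) = (y \<bullet> y - y \<bullet> Tb A y) - 2 * (d \<bullet> (y - Tb A y)) + (d \<bullet> d - d \<bullet> Tb A d)"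
      by (rule Q_expand[OF linA saA])
    have fsum: "(\<Sum>i\<in>UNIV. f i ((y - d)$i)) \<le> (\<Sum>i\<in>UNIV. f i (y$i)) - Gv y \<bullet> d + L/2 * (d \<bullet> d)"
    proof -
      have "(\<Sum>i\<in>UNIV. f i ((y - d)$i)) \<le> (\<Sum>i\<in>UNIV. f i (y$i) + g i (y$i) \<bullet> ((y - d)$i - y$i) + L/2 * (norm ((y - d)$i - y$i))\<^sup>2)"
        by (rule sum_mono) (rule descent[OF der lipL])
      also have "\<dots> = (\<Sum>i\<in>UNIV. f i (y$i)) - (\<Sum>i\<in>UNIV. g i (y$i) \<bullet> d$i) + L/2 * (\<Sum>i\<in>UNIV. (norm (d$i))\<^sup>2)"
        by (simp add: sum.distrib sum_negf sum_distrib_left sum_subtractf)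
      also have "(\<Sum>i\<in>UNIV. g i (y$i) \<bullet> d$i) = Gv y \<bullet> d" unfolding Gv_def by (simp add: inner_vec_def)
      also have "(\<Sum>i\<in>UNIV. (norm (d$i))\<^sup>2) = d \<bullet> d" by (simp add: power2_norm_eq_inner inner_vec_def)
      finally show ?thesis .
    qed
    define dd where "dd = d \<bullet> d"
    define dT where "dT = d \<bullet> Tb A d"
    define p where "p = d \<bullet> (y - Tb A y)"
    define gd where "gd = Gv y \<bullet> d"
    define Sy where "Sy = (\<Sum>i\<in>UNIV. f i (y$i))"
    define Syd where "Syd = (\<Sum>i\<in>UNIV. f i ((y - d)$i))"
    have dd0: "dd \<ge> 0" unfolding dd_def by simp
    have e1': "dd = p + alpha * gd" unfolding dd_def p_def gd_def
      by (subst (2) d_def) (simp add: inner_add_right inner_commute)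
    then have e1: "p = dd - alpha * gd" by simp
    have e2: "lambda_min A * dd \<le> dT" unfolding dd_def dT_def using lamA[of d] by (simp add: power2_norm_eq_inner)
    have e3: "alpha * L * dd \<le> dd + lambda_min A * dd"
    proof -
      have "alpha * L * dd \<le> (1 + lambda_min A) * dd" using aL dd0 by (intro mult_right_mono) auto
      then show ?thesis by (simp add: algebra_simps)
    qed
    have e4: "alpha * Syd \<le> alpha * Sy - alpha * gd + (alpha * L * dd) / 2"
    proof -
      have "alpha * Syd \<le> alpha * (Sy - gd + L/2 * dd)" using fsum alpha_pos unfolding Syd_def Sy_def gd_def dd_def
        by (intro mult_left_mono) auto
      then show ?thesis by (simp add: algebra_simps)
    qed
    have "xi (X (Suc k)) = 1/2 * ((y \<bullet> y - y \<bullet> Tb A y) - 2 * p + (dd - dT)) + alpha * Syd"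
      unfolding xi_def Xs Q Syd_def p_def dd_def dT_def ..
    also have "\<dots> \<le> 1/2 * (y \<bullet> y - y \<bullet> Tb A y) + alpha * Sy"
    proof -
      define Qy where "Qy = y \<bullet> y - y \<bullet> Tb A y"
      have s1: "alpha * L * dd \<le> dd + dT" using e2 e3 by linarith
      have s2: "1 / 2 * (Qy - 2 * p + (dd - dT)) = Qy/2 - p + dd/2 - dT/2" by simp
      show ?thesis unfolding Qy_def[symmetric] s2 using s1 e1 e4 by linarith
    qed
    also have "\<dots> = xi (X k)" unfolding xi_def y_def Sy_def ..
    finally show ?thesis .
  qed
  have xi_bound: "xi (X k) \<le> xi (X 0)" for k
  proof (induction k)
    case (Suc k) then show ?case using xi_desc[of k] by linarith
  qed simp
  have xi0: "xi (X 0) = alpha * (\<Sum>i\<in>UNIV. f i 0)" unfolding xi_def X0 by (simp add: Tb_zero)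
  have fsumk: "(\<Sum>i\<in>UNIV. f i (X k $ i)) \<le> (\<Sum>i\<in>UNIV. f i 0)" for k
  proof -
    have "alpha * (\<Sum>i\<in>UNIV. f i (X k $ i)) \<le> alpha * (\<Sum>i\<in>UNIV. f i 0)"
      using xi_low[of "X k"] xi_bound[of k] xi0 by linarith
    then show ?thesis using alpha_pos by simp
  qed
  have Darg: "0 \<le> 2 * L * (\<Sum>i\<in>UNIV. f i 0 - fmin i)"
  proof -
    have "0 \<le> (\<Sum>i\<in>UNIV. f i 0 - fmin i)" using fmin_le by (intro sum_nonneg) (simp add: fmin_le)
    then show ?thesis using Lpos by (intro mult_nonneg_nonneg) auto
  qed
  have D0: "D \<ge> 0" unfolding D_def using Darg by simp
  have Dsq: "D\<^sup>2 = 2 * L * (\<Sum>i\<in>UNIV. f i 0 - fmin i)" unfolding D_def using Darg by simp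
  have gradb: "norm (Gv (X k)) \<le> D" for k
  proof -
    have "(norm (Gv (X k)))\<^sup>2 = (\<Sum>i\<in>UNIV. (norm (g i (X k $ i)))\<^sup>2)" unfolding norm_sq_vec Gv_def by simp
    also have "\<dots> \<le> (\<Sum>i\<in>UNIV. 2 * L * (f i (X k $ i) - fmin i))"
      by (rule sum_mono) (rule grad_bound[OF der lipL Lpos fmin_le])
    also have "\<dots> = 2 * L * ((\<Sum>i\<in>UNIV. f i (X k $ i)) - (\<Sum>i\<in>UNIV. fmin i))"
      by (simp only: sum_distrib_left[symmetric] sum_subtractf)
    also have "\<dots> \<le> 2 * L * ((\<Sum>i\<in>UNIV. f i 0) - (\<Sum>i\<in>UNIV. fmin i))"
      using fsumk[of k] Lpos by (intro mult_left_mono) auto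
    also have "\<dots> = D\<^sup>2" unfolding Dsq by (simp add: sum_subtractf)
    finally show ?thesis using D0 by (rule power2_le_imp_le)
  qed
  define avg where "avg y = (1/N) *\<^sub>R (\<Sum>i\<in>UNIV. y$i)" for y :: "'a^'n"
  define C where "C v = ((\<chi> i. v) :: 'a^'n)" for v :: 'a
  define xb where "xb k = avg (X k)" for k
  define gb where "gb k = avg (Gv (X k))" for k
  define E where "E k = X k - C (xb k)" for k
  have sumA: "(\<Sum>i\<in>UNIV. Tb A y $ i) = (\<Sum>i\<in>UNIV. y$i)" for y :: "'a^'n"
    unfolding A_def by (rule TA_sum[OF W_sym row])
  have constA: "Tb A (C v) = C v" for v unfolding A_def C_def by (rule TA_const[OF row])
  have contrA: "norm (Tb A y) \<le> beta^t * norm y" if "y \<in> S0" for y :: "'a^'n"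
    unfolding A_def beta_def by (rule TA_contr[OF W_sym row W_simple1 _ that]) (use beta_pos in \<open>auto simp: beta_def\<close>)
  have xbS: "xb (Suc k) = xb k - alpha *\<^sub>R gb k" for k
  proof -
    have "(\<Sum>i\<in>UNIV. X (Suc k) $ i) = (\<Sum>i\<in>UNIV. X k $ i) - alpha *\<^sub>R (\<Sum>i\<in>UNIV. Gv (X k) $ i)"
      unfolding XS by (simp add: sum_subtractf scaleR_sum_right sumA)
    note eq = this
    show ?thesis unfolding xb_def gb_def avg_def eq by (simp add: scaleR_diff_right)
  qed
  have ES0: "E k \<in> S0" for k
  proof -
    have "(\<Sum>i\<in>UNIV. E k $ i) = (\<Sum>i\<in>UNIV. X k $ i) - N *\<^sub>R xb k"
      unfolding E_def C_def N_def by (simp add: sum_subtractf sum_constant_scaleR)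
    also have "\<dots> = 0" unfolding xb_def avg_def using N by simp
    finally show ?thesis unfolding S0_def by simp
  qed
  have ESuc: "E (Suc k) = Tb A (E k) - alpha *\<^sub>R (Gv (X k) - C (gb k))" for k
  proof -
    have "E (Suc k) = Tb A (X k) - alpha *\<^sub>R Gv (X k) - C (xb k - alpha *\<^sub>R gb k)"
      unfolding E_def XS xbS ..
    also have "\<dots> = (Tb A (X k) - C (xb k)) - alpha *\<^sub>R (Gv (X k) - C (gb k))"
      unfolding C_def by (simp add: vec_eq_iff algebra_simps)
    also have "Tb A (X k) - C (xb k) = Tb A (E k)" unfolding E_def by (simp add: Tb_diff constA)
    finally show ?thesis .
  qed
  have devG: "norm (Gv (X k) - C (gb k)) \<le> norm (Gv (X k))" for k
    unfolding gb_def avg_def C_def N_def by (rule dev_norm)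
  have Enorm: "norm (E (Suc k)) \<le> beta^t * norm (E k) + alpha * D" for k
  proof -
    have "norm (E (Suc k)) \<le> norm (Tb A (E k)) + norm (alpha *\<^sub>R (Gv (X k) - C (gb k)))"
      unfolding ESuc by (rule norm_triangle_ineq4)
    also have "norm (alpha *\<^sub>R (Gv (X k) - C (gb k))) = alpha * norm (Gv (X k) - C (gb k))"
      using alpha_pos by simp
    also have "alpha * norm (Gv (X k) - C (gb k)) \<le> alpha * D"
      using devG[of k] gradb[of k] alpha_pos by (intro mult_left_mono) auto
    finally show ?thesis using contrA[OF ES0[of k]] by linarith
  qed
  define B where "B = alpha * D / (1 - beta^t)"
  have B0: "B \<ge> 0" unfolding B_def using alpha_pos D0 bt by simp
  have BB: "beta^t * B + alpha * D = B" unfolding B_def using bt by (simp add: field_simps)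
  have Ebound: "norm (E k) \<le> B" for k
  proof (induction k)
    case 0
    have "E 0 = 0" unfolding E_def xb_def avg_def C_def X0 by (simp add: vec_eq_iff)
    then show ?case using B0 by simp
  next
    case (Suc k)
    have "norm (E (Suc k)) \<le> beta^t * norm (E k) + alpha * D" by (rule Enorm)
    also have "\<dots> \<le> beta^t * B + alpha * D" using Suc bt by (simp add: mult_left_mono)
    finally show ?case using BB by simp
  qed
  have devX: "norm (X k $ i - xb k) \<le> B" for k i
  proof -
    have "X k $ i - xb k = E k $ i" unfolding E_def C_def by simp
    then show ?thesis using Finite_Cartesian_Product.norm_nth_le[of "E k" i] Ebound[of k] by simp
  qed
  define Fb where "Fb x = (1/N) * (\<Sum>i\<in>UNIV. f i x)" for x
  define Gf where "Gf x = (1/N) *\<^sub>R (\<Sum>i\<in>UNIV. g i x)" for x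
  have derh: "((\<lambda>x. \<Sum>i\<in>UNIV. f i x) has_derivative (\<lambda>y. \<Sum>i\<in>UNIV. g i x \<bullet> y)) (at x)" for x
    by (rule has_derivative_sum) (rule der)
  have derF: "(Fb has_derivative (\<lambda>y. Gf x \<bullet> y)) (at x)" for x
  proof -
    have "((\<lambda>x. (1/N) * (\<Sum>i\<in>UNIV. f i x)) has_derivative (\<lambda>y. (1/N) * (\<Sum>i\<in>UNIV. g i x \<bullet> y))) (at x)"
      using has_derivative_mult[OF has_derivative_const[of "1/N"] derh[of x]] by simp
    moreover have "(\<lambda>y. (1/N) * (\<Sum>i\<in>UNIV. g i x \<bullet> y)) = (\<lambda>y. Gf x \<bullet> y)"
      unfolding Gf_def by (simp add: inner_sum_left)
    ultimately show ?thesis unfolding Fb_def by simp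
  qed
  have liph: "norm ((\<Sum>i\<in>UNIV. g i x) - (\<Sum>i\<in>UNIV. g i y)) \<le> SL * norm (x - y)" for x y
  proof -
    have "norm ((\<Sum>i\<in>UNIV. g i x) - (\<Sum>i\<in>UNIV. g i y)) = norm (\<Sum>i\<in>UNIV. g i x - g i y)"
      by (simp add: sum_subtractf)
    also have "\<dots> \<le> (\<Sum>i\<in>UNIV. norm (g i x - g i y))" by (rule norm_sum)
    also have "\<dots> \<le> (\<Sum>i\<in>UNIV. Li i * norm (x - y))" by (rule sum_mono) (use f_lip in blast)
    also have "\<dots> = SL * norm (x - y)" unfolding SL_def by (simp add: sum_distrib_right)
    finally show ?thesis .
  qed
  have lipGf: "norm (Gf x - Gf y) \<le> Lf * norm (x - y)" for x y
  proof -
    have "Gf x - Gf y = (1/N) *\<^sub>R ((\<Sum>i\<in>UNIV. g i x) - (\<Sum>i\<in>UNIV. g i y))"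
      unfolding Gf_def by (simp add: scaleR_diff_right)
    then have "norm (Gf x - Gf y) = (1/N) * norm ((\<Sum>i\<in>UNIV. g i x) - (\<Sum>i\<in>UNIV. g i y))"
      using N by simp
    also have "\<dots> \<le> (1/N) * (SL * norm (x - y))" using liph N by (intro mult_left_mono) auto
    also have "\<dots> = Lf * norm (x - y)" unfolding Lf_def SL_def N_def by simp
    finally show ?thesis .
  qed
  have scF: "convex_on UNIV (\<lambda>x. Fb x - mu/2 * (norm x)\<^sup>2)"
  proof -
    have "convex_on UNIV (\<lambda>x. (1/N) * ((\<Sum>i\<in>UNIV. f i x) - (mu_h / 2) * (norm x)\<^sup>2))"
      using h_sc N unfolding strongly_convex_def by (intro convex_on_cmul) auto
    moreover have "(\<lambda>x. (1/N) * ((\<Sum>i\<in>UNIV. f i x) - (mu_h / 2) * (norm x)\<^sup>2)) = (\<lambda>x. Fb x - mu/2 * (norm x)\<^sup>2)"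
      unfolding Fb_def mu_def N_def by (auto simp: field_simps)
    ultimately show ?thesis by simp
  qed
  have SLpos: "SL > 0" using SL_ge Lpos by simp
  have hg0: "(\<Sum>i\<in>UNIV. g i xstar) = 0"
  proof -
    have derh2: "((\<lambda>x. \<Sum>i\<in>UNIV. f i x) has_derivative (\<lambda>y. (\<lambda>x. \<Sum>i\<in>UNIV. g i x) x \<bullet> y)) (at x)" for x
      using derh[of x] by (simp add: inner_sum_left)
    have liph2: "norm ((\<lambda>x. \<Sum>i\<in>UNIV. g i x) x - (\<lambda>x. \<Sum>i\<in>UNIV. g i x) y) \<le> SL * norm (x - y)" for x y
      using liph[of x y] by simp
    have mh: "(\<lambda>x. \<Sum>i\<in>UNIV. f i x) xstar \<le> (\<lambda>x. \<Sum>i\<in>UNIV. f i x) z" for z using xstar_min by simp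
    have "(norm ((\<lambda>x. \<Sum>i\<in>UNIV. g i x) xstar))\<^sup>2 \<le> 2 * SL * ((\<lambda>x. \<Sum>i\<in>UNIV. f i x) xstar - (\<lambda>x. \<Sum>i\<in>UNIV. f i x) xstar)"
      by (rule grad_bound[OF derh2 liph2 SLpos mh])
    then show ?thesis by simp
  qed
  have Gf0: "Gf xstar = 0" unfolding Gf_def hg0 by simp
  have a2: "alpha \<le> 2 / (mu + Lf)" using alpha_le2 unfolding mu_def Lf_def .
  have contr_avg: "(norm (y - alpha *\<^sub>R Gf y - xstar))\<^sup>2 \<le> (1 - alpha * c2) * (norm (y - xstar))\<^sup>2" for y
    unfolding c2_def by (rule gd_contract[OF derF lipGf scF mu_pos Lf_pos Gf0 alpha_pos a2])
  have pert: "norm (Gf (xb k) - gb k) \<le> L * B" for k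
  proof -
    have "Gf (xb k) - gb k = (1/N) *\<^sub>R (\<Sum>i\<in>UNIV. g i (xb k) - g i (X k $ i))"
      unfolding Gf_def gb_def avg_def Gv_def by (simp add: scaleR_diff_right sum_subtractf)
    then have "norm (Gf (xb k) - gb k) = (1/N) * norm (\<Sum>i\<in>UNIV. g i (xb k) - g i (X k $ i))"
      using N by simp
    also have "\<dots> \<le> (1/N) * (\<Sum>i\<in>(UNIV::'n set). L * B)"
    proof -
      have "norm (\<Sum>i\<in>UNIV. g i (xb k) - g i (X k $ i)) \<le> (\<Sum>i\<in>UNIV. norm (g i (xb k) - g i (X k $ i)))"
        by (rule norm_sum)
      also have "\<dots> \<le> (\<Sum>i\<in>(UNIV::'n set). L * B)"
      proof -
        have pw: "norm (g i (xb k) - g i (X k $ i)) \<le> L * B" for i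
        proof -
          have "norm (g i (xb k) - g i (X k $ i)) \<le> L * norm (xb k - X k $ i)" by (rule lipL)
          also have "\<dots> \<le> L * B" using devX[of k i] Lpos by (simp add: norm_minus_commute)
          finally show ?thesis .
        qed
        show ?thesis by (rule sum_mono) (rule pw)
      qed
      finally show ?thesis using N by (intro mult_left_mono) auto
    qed
    also have "\<dots> = L * B" unfolding N_def by simp
    finally show ?thesis .
  qed
  have omc: "1 - alpha * c2 > 0" using ac2 by simp
  have dpos: "delta > 0" unfolding delta_def using c2_pos omc by simp
  have c1arg: "0 \<le> 1 - alpha * c2 / 2" using ac2 by linarith
  have c1sq: "c1\<^sup>2 = 1 - alpha * c2 / 2" unfolding c1_def by (rule real_sqrt_pow2[OF c1arg])
  have c10: "0 \<le> c1" unfolding c1_def by (rule real_sqrt_ge_zero[OF c1arg])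
  have ac2pos: "alpha * c2 > 0" using alpha_pos c2_pos by simp
  have c11: "c1 \<le> 1"
  proof -
    have "1 - alpha * c2 / 2 \<le> 1" using ac2pos by simp
    then show ?thesis unfolding c1_def using real_sqrt_le_mono[of "1 - alpha * c2 / 2" 1] by simp
  qed
  define s where "s = sqrt (1 - c1\<^sup>2)"
  have sarg: "1 - c1\<^sup>2 > 0" unfolding c1sq using ac2pos by simp
  have spos: "s > 0" unfolding s_def using sarg by simp
  have ssq: "s\<^sup>2 = 1 - c1\<^sup>2" unfolding s_def using sarg by simp
  have comb: "(1 + alpha * delta) * (1 - alpha * c2) = c1\<^sup>2"
    unfolding c1sq delta_def using omc by (simp add: field_simps)
  define Eb where "Eb = c3 / (1 - beta^t)"
  have c30: "c3 \<ge> 0" unfolding c3_def using alpha_pos dpos Lpos D0 by simp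
  have Eb0: "Eb \<ge> 0" unfolding Eb_def using c30 bt by simp
  have EbSq: "alpha * (alpha + 1/delta) * (L * B)\<^sup>2 = Eb\<^sup>2"
  proof -
    have arg: "0 \<le> alpha ^ 3 * (alpha + 1 / delta)" using alpha_pos dpos by simp
    have "c3\<^sup>2 = alpha ^ 3 * (alpha + 1 / delta) * L\<^sup>2 * D\<^sup>2"
      unfolding c3_def using arg by (simp add: power_mult_distrib)
    then show ?thesis unfolding Eb_def B_def using bt
      by (simp add: power_divide power_mult_distrib field_simps power3_eq_cube power2_eq_square)
  qed
  have rstep: "(norm (xb (Suc k) - xstar))\<^sup>2 \<le> c1\<^sup>2 * (norm (xb k - xstar))\<^sup>2 + Eb\<^sup>2" for k
  proof -
    define a where "a = xb k - alpha *\<^sub>R Gf (xb k) - xstar"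
    define e where "e = Gf (xb k) - gb k"
    have eq: "xb (Suc k) - xstar = a + alpha *\<^sub>R e" unfolding a_def e_def xbS by (simp add: algebra_simps)
    have ad: "alpha * delta > 0" using alpha_pos dpos by simp
    have "(norm (a + alpha *\<^sub>R e))\<^sup>2 \<le> (1 + alpha * delta) * (norm a)\<^sup>2 + (1 + 1/(alpha * delta)) * (norm (alpha *\<^sub>R e))\<^sup>2"
      by (rule young[OF ad])
    also have "(1 + alpha * delta) * (norm a)\<^sup>2 \<le> (1 + alpha * delta) * ((1 - alpha * c2) * (norm (xb k - xstar))\<^sup>2)"
      using contr_avg[of "xb k"] ad unfolding a_def by (intro mult_left_mono) auto
    also have "(1 + 1/(alpha * delta)) * (norm (alpha *\<^sub>R e))\<^sup>2 = alpha * (alpha + 1/delta) * (norm e)\<^sup>2"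
      using alpha_pos dpos by (simp add: power_mult_distrib field_simps power2_eq_square)
    also have "alpha * (alpha + 1/delta) * (norm e)\<^sup>2 \<le> alpha * (alpha + 1/delta) * (L * B)\<^sup>2"
      using pert[of k] alpha_pos dpos unfolding e_def by (intro mult_left_mono power_mono) auto
    finally show ?thesis unfolding eq EbSq comb[symmetric] by (simp add: mult.assoc)
  qed
  have rbound: "norm (xb k - xstar) \<le> c1^k * norm xstar + Eb / s" for k
  proof (induction k)
    case 0
    have "xb 0 = 0" unfolding xb_def avg_def X0 by simp
    then show ?case using Eb0 spos by simp
  next
    case (Suc k)
    have "norm (xb (Suc k) - xstar) \<le> c1 * (c1^k * norm xstar) + Eb / s"
      by (rule rec_step[OF c10 c11 spos ssq Eb0 _ _ Suc rstep]) (use c10 in simp_all)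
    then show ?case by (simp add: mult.assoc)
  qed
  have final: "norm (X k $ i - xstar) \<le> c1 ^ k * norm xstar + c3 / (sqrt (1 - c1\<^sup>2) * (1 - beta ^ t)) + alpha * D / (1 - beta ^ t)" for k i
  proof -
    have "norm (X k $ i - xstar) \<le> B + (c1^k * norm xstar + Eb / s)"
      by (rule norm_diff_triangle_le[OF devX rbound])
    moreover have "Eb / s = c3 / (sqrt (1 - c1\<^sup>2) * (1 - beta ^ t))" unfolding Eb_def s_def by simp
    ultimately show ?thesis unfolding B_def by simp
  qed
  have "\<forall>k i. norm (dgd W t alpha g k i - xstar) \<le> c1 ^ k * norm xstar + c3 / (sqrt (1 - c1\<^sup>2) * (1 - beta ^ t)) + alpha * D / (1 - beta ^ t)"
    using final by (simp add: Xi)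
  then show ?thesis
    unfolding Let_def c1_def c3_def delta_def c2_def mu_def Lf_def D_def fmin_def L_def beta_def .
qed

end
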